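(* Let $M$ be a simply-connected domain in the Minkowski plane $(\mathbb{R}^2(u,v),du\,dv)$ and $\omega,Q,R:M\to\mathbb{R}$ smooth. (1) If $\Phi=(\Phi_1,\Phi_2):M\to\mathrm{SL}_2\mathbb{R}\times\mathrm{SL}_2\mathbb{R}$ satisfies $(\Phi_i)_u=\Phi_i\mathcal U_i$, $(\Phi_i)_v=\Phi_i\mathcal V_i$ ($i=1,2$) with $$\mathcal U_1=\begin{pmatrix}\frac{\omega_u}{4}&e^{\omega/2}\\-e^{-\omega/2}Q&-\frac{\omega_u}{4}\end{pmatrix},\ \mathcal V_1=\begin{pmatrix}-\frac{\omega_v}{4}&e^{-\omega/2}R\\0&\frac{\omega_v}{4}\end{pmatrix},\ \mathcal U_2=\begin{pmatrix}-\frac{\omega_u}{4}&e^{-\omega/2}Q\\0&\frac{\omega_u}{4}\end{pmatrix},\ \mathcal V_2=\begin{pmatrix}\frac{\omega_v}{4}&e^{\omega/2}\\-e^{-\omega/2}R&-\frac{\omega_v}{4}\end{pmatrix},$$ then $\varphi=\Phi_1\Phi_2^t:M\to\mathbb{H}^3_1(-1)$ is a conformal timelike immersion of constant mean curvature $1$. (2) If $\Psi=(\Psi_1,\Psi_2):M\to\mathrm{SL}_2\mathbb{R}\times\mathrm{SL}_2\mathbb{R}$ satisfies $(\Psi_1)_u=\Psi_1\mathcal U_1$, $(\Psi_1)_v=\Psi_1\mathcal V_1$ (as in (1)) and $(\Psi_2)_u=\Psi_2\begin{pmatrix}\frac{\omega_u}{4}&0\\-e^{-\omega/2}Q&-\frac{\omega_u}{4}\end{pmatrix}$,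 $(\Psi_2)_v=\Psi_2\begin{pmatrix}-\frac{\omega_v}{4}&e^{-\omega/2}R\\-e^{\omega/2}&\frac{\omega_v}{4}\end{pmatrix}$, then $\psi=\Psi_1\Psi_2^{-1}:M\to\mathbb{H}^3_1(-1)$ is a conformal timelike immersion of constant mean curvature $1$.
   Context: $\mathbb{E}^4_2$ (metric $-(dx_0)^2-(dx_1)^2+(dx_2)^2+(dx_3)^2$) is identified with $M_2(\mathbb{R})$ via $(x_0,x_1,x_2,x_3)\mapsto \begin{pmatrix}x_0+x_3& x_1+x_2\\ -x_1+x_2 & x_0-x_3\end{pmatrix}$, with $\langle u,v\rangle=\tfrac12\{\operatorname{tr}(uv)-\operatorname{tr}u\operatorname{tr}v\}$; then $\mathbb{H}^3_1(-1)=\{\langle x,x\rangle=-1\}=\mathrm{SL}_2\mathbb{R}$. Conformal timelike with null coordinates $(u,v)$: $\langle\varphi_u,\varphi_u\rangle=\langle\varphi_v,\varphi_v\rangle=0$, $\langle\varphi_u,\varphi_v\rangle=\tfrac12e^\omega$. Mean curvature with respect to the unit normal $N=\Phi_1\mathbf k'\Phi_2^t$ (resp. $\Psi_1\mathbf k'\Psi_2^{-1}$), $\mathbf k'=\mathrm{diag}(1,-1)$, is $H=2e^{-\omega}\langle\varphi_{uv},N\rangle$. *)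

theory Defs
  imports "HOL-Analysis.Analysis"
begin

type_synonym mat2 = "real^2^2"

definition mat2 :: "real \<Rightarrow> real \<Rightarrow> real \<Rightarrow> real \<Rightarrow> mat2" where
  "mat2 a b c d = (\<chi> i j. if i = 1 then (if j = 1 then a else b) else (if j = 1 then c else d))"

text \<open>The neutral inner product on M_2(R) identified with E^4_2.\<close>
definition ip :: "mat2 \<Rightarrow> mat2 \<Rightarrow> real" where
  "ip x y = (trace (x ** y) - trace x * trace y) / 2"

definition SL2R :: "mat2 set" where "SL2R = {A. det A = 1}"

definition H31 :: "mat2 set" where "H31 = {x. ip x x = -1}"

definition kprime :: mat2 where "kprime = mat2 1 0 0 (-1)"

definition pd_u :: "(real \<times> real \<Rightarrow> 'a::real_normed_vector) \<Rightarrow> real \<times> real \<Rightarrow> 'a" where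
  "pd_u f p = vector_derivative (\<lambda>t. f (t, snd p)) (at (fst p))"

definition pd_v :: "(real \<times> real \<Rightarrow> 'a::real_normed_vector) \<Rightarrow> real \<times> real \<Rightarrow> 'a" where
  "pd_v f p = vector_derivative (\<lambda>t. f (fst p, t)) (at (snd p))"

definition has_pd_v :: "(real \<times> real \<Rightarrow> 'a::real_normed_vector) \<Rightarrow> 'a \<Rightarrow> real \<times> real \<Rightarrow> bool" where
  "has_pd_v f D p \<longleftrightarrow> ((\<lambda>t. f (fst p, t)) has_vector_derivative D) (at (snd p))"

fun iter_pd :: "bool list \<Rightarrow> (real \<times> real \<Rightarrow> real) \<Rightarrow> real \<times> real \<Rightarrow> real" where
  "iter_pd [] f = f"
| "iter_pd (b # bs) f = (if b then pd_u else pd_v) (iter_pd bs f)"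

definition smooth_on :: "(real \<times> real) set \<Rightarrow> (real \<times> real \<Rightarrow> real) \<Rightarrow> bool" where
  "smooth_on M f \<longleftrightarrow> (\<forall>bs. iter_pd bs f differentiable_on M)"

definition frame_eq :: "(real \<times> real) set \<Rightarrow> (real \<times> real \<Rightarrow> mat2) \<Rightarrow> (real \<times> real \<Rightarrow> mat2)
    \<Rightarrow> (real \<times> real \<Rightarrow> mat2) \<Rightarrow> bool" where
  "frame_eq M F U V \<longleftrightarrow> (\<forall>p\<in>M.
     (F has_derivative (\<lambda>h. fst h *\<^sub>R (F p ** U p) + snd h *\<^sub>R (F p ** V p))) (at p))"

definition U1 :: "(real \<times> real \<Rightarrow> real) \<Rightarrow> (real \<times> real \<Rightarrow> real) \<Rightarrow> real \<times> real \<Rightarrow> mat2" where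
  "U1 \<omega> Q p = mat2 (pd_u \<omega> p / 4) (exp (\<omega> p / 2)) (- exp (- \<omega> p / 2) * Q p) (- pd_u \<omega> p / 4)"
definition V1 :: "(real \<times> real \<Rightarrow> real) \<Rightarrow> (real \<times> real \<Rightarrow> real) \<Rightarrow> real \<times> real \<Rightarrow> mat2" where
  "V1 \<omega> R p = mat2 (- pd_v \<omega> p / 4) (exp (- \<omega> p / 2) * R p) 0 (pd_v \<omega> p / 4)"
definition U2 :: "(real \<times> real \<Rightarrow> real) \<Rightarrow> (real \<times> real \<Rightarrow> real) \<Rightarrow> real \<times> real \<Rightarrow> mat2" where
  "U2 \<omega> Q p = mat2 (- pd_u \<omega> p / 4) (exp (- \<omega> p / 2) * Q p) 0 (pd_u \<omega> p / 4)"
definition V2 :: "(real \<times> real \<Rightarrow> real) \<Rightarrow> (real \<times> real \<Rightarrow> real) \<Rightarrow> real \<times> real \<Rightarrow> mat2" where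
  "V2 \<omega> R p = mat2 (pd_v \<omega> p / 4) (exp (\<omega> p / 2)) (- exp (- \<omega> p / 2) * R p) (- pd_v \<omega> p / 4)"
definition U2' :: "(real \<times> real \<Rightarrow> real) \<Rightarrow> (real \<times> real \<Rightarrow> real) \<Rightarrow> real \<times> real \<Rightarrow> mat2" where
  "U2' \<omega> Q p = mat2 (pd_u \<omega> p / 4) 0 (- exp (- \<omega> p / 2) * Q p) (- pd_u \<omega> p / 4)"
definition V2' :: "(real \<times> real \<Rightarrow> real) \<Rightarrow> (real \<times> real \<Rightarrow> real) \<Rightarrow> real \<times> real \<Rightarrow> mat2" where
  "V2' \<omega> R p = mat2 (- pd_v \<omega> p / 4) (exp (- \<omega> p / 2) * R p) (- exp (\<omega> p / 2)) (pd_v \<omega> p / 4)"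

text \<open>phi : M -> H^3_1(-1) is a conformal timelike immersion with null coordinates (u,v),
  conformal factor e^omega, unit normal N, and constant mean curvature
  H = 2 e^(-omega) <phi_uv, N> = 1.\<close>
definition cmc1_conformal_timelike ::
  "(real \<times> real) set \<Rightarrow> (real \<times> real \<Rightarrow> mat2) \<Rightarrow> (real \<times> real \<Rightarrow> real) \<Rightarrow> (real \<times> real \<Rightarrow> mat2) \<Rightarrow> bool" where
  "cmc1_conformal_timelike M \<phi> \<omega> N \<longleftrightarrow> (\<forall>p\<in>M.
      \<phi> p \<in> H31 \<and>
      \<phi> differentiable (at p) \<and> inj (frechet_derivative \<phi> (at p)) \<and>
      ip (pd_u \<phi> p) (pd_u \<phi> p) = 0 \<and> ip (pd_v \<phi> p) (pd_v \<phi> p) = 0 \<and>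
      ip (pd_u \<phi> p) (pd_v \<phi> p) = exp (\<omega> p) / 2 \<and>
      ip (N p) (N p) = 1 \<and> ip (N p) (\<phi> p) = 0 \<and>
      ip (N p) (pd_u \<phi> p) = 0 \<and> ip (N p) (pd_v \<phi> p) = 0 \<and>
      (\<exists>D. has_pd_v (pd_u \<phi>) D p) \<and>
      2 * exp (- \<omega> p) * ip (pd_v (pd_u \<phi>) p) (N p) = 1)"

end

theory Submission imports Defs begin


lemma mat2_nth[simp]: "mat2 a b c d $ 1 $ 1 = a" "mat2 a b c d $ 1 $ 2 = b"
  "mat2 a b c d $ 2 $ 1 = c" "mat2 a b c d $ 2 $ 2 = d"
  by (simp_all add: mat2_def)

lemma mult_nth: "((A::mat2) ** B) $ i $ j = A$i$1 * B$1$j + A$i$2 * B$2$j"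
  by (simp add: matrix_matrix_mult_def sum_2)

lemma mat2_eq: "(A::mat2) = B \<longleftrightarrow> A$1$1 = B$1$1 \<and> A$1$2 = B$1$2 \<and> A$2$1 = B$2$1 \<and> A$2$2 = B$2$2"
  by (auto simp: vec_eq_iff forall_2)

lemma trace2: "trace (A::mat2) = A$1$1 + A$2$2"
  by (simp add: trace_def sum_2)

lemma transpose_nth: "transpose A $ i $ j = A $ j $ i"
  by (simp add: transpose_def)

lemma mat_nth2: "(mat 1 :: mat2) $ 1 $ 1 = 1" "(mat 1 :: mat2) $ 1 $ 2 = 0"
  "(mat 1 :: mat2) $ 2 $ 1 = 0" "(mat 1 :: mat2) $ 2 $ 2 = 1"
  by (simp_all add: mat_def)

lemmas ent = mat2_eq mult_nth algebra_simps

lemma ip_det: "ip x y = - (det (x + y) - det x - det y) / 2"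
  by (simp add: ip_def trace2 det_2 mult_nth algebra_simps)

lemma ip_inv: assumes "det (A::mat2) = 1" "det (B::mat2) = 1"
  shows "ip (A ** X ** B) (A ** Y ** B) = ip X Y"
proof -
  have "A ** X ** B + A ** Y ** B = A ** (X + Y) ** B"
    by (simp add: ent)
  then show ?thesis using assms by (simp add: ip_det det_mul)
qed

lemma ip_self: "ip x x = - det x" by (simp add: ip_def trace2 det_2 mult_nth field_simps)

lemma ip_lin: "ip (c *\<^sub>R X + d *\<^sub>R Y) Z = c * ip X Z + d * ip Y Z"
  by (simp add: ip_def trace2 mult_nth field_simps)

lemma ip_sym: "ip X Y = ip Y X"
  by (simp add: ip_def trace2 mult_nth field_simps)

lemma bilin: "bounded_bilinear ((**) :: mat2 \<Rightarrow> mat2 \<Rightarrow> mat2)"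
  unfolding bilinear_conv_bounded_bilinear[symmetric] bilinear_def
  by (auto intro!: linearI simp: ent)

lemma partials:
  fixes f :: "real \<times> real \<Rightarrow> 'a::real_normed_vector"
  assumes "(f has_derivative (\<lambda>h. fst h *\<^sub>R X + snd h *\<^sub>R Y)) (at (a,b))"
  shows "((\<lambda>t. f (t,b)) has_vector_derivative X) (at a)"
    "((\<lambda>t. f (a,t)) has_vector_derivative Y) (at b)"
    "pd_u f (a,b) = X" "pd_v f (a,b) = Y"
proof -
  have "((\<lambda>t. (t,b)) has_derivative (\<lambda>h. (h,0))) (at a)"
    by (auto intro!: derivative_eq_intros)
  from has_derivative_compose[OF this assms]
  have "((\<lambda>t. f (t,b)) has_derivative (\<lambda>h. h *\<^sub>R X)) (at a)" by simp
  then show 1: "((\<lambda>t. f (t,b)) has_vector_derivative X) (at a)"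
    by (simp add: has_vector_derivative_def)
  have "((\<lambda>t. (a,t)) has_derivative (\<lambda>h. (0,h))) (at b)"
    by (auto intro!: derivative_eq_intros)
  from has_derivative_compose[OF this assms]
  have "((\<lambda>t. f (a,t)) has_derivative (\<lambda>h. h *\<^sub>R Y)) (at b)" by simp
  then show 2: "((\<lambda>t. f (a,t)) has_vector_derivative Y) (at b)"
    by (simp add: has_vector_derivative_def)
  show "pd_u f (a,b) = X" using 1 by (simp add: pd_u_def vector_derivative_at)
  show "pd_v f (a,b) = Y" using 2 by (simp add: pd_v_def vector_derivative_at)
qed

lemma lin_decomp:
  assumes "linear (f :: real \<times> real \<Rightarrow> 'a::real_vector)"
  shows "f = (\<lambda>h. fst h *\<^sub>R f (1,0) + snd h *\<^sub>R f (0,1))"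
proof
  fix h :: "real \<times> real"
  have "h = fst h *\<^sub>R (1,0) + snd h *\<^sub>R (0,1)" by (cases h) simp
  then have "f h = f (fst h *\<^sub>R (1,0) + snd h *\<^sub>R (0,1))" by simp
  also have "\<dots> = fst h *\<^sub>R f (1,0) + snd h *\<^sub>R f (0,1)"
    by (simp only: linear_add[OF assms] linear_scale[OF assms])
  finally show "f h = fst h *\<^sub>R f (1,0) + snd h *\<^sub>R f (0,1)" .
qed



lemma exp_half: "exp (x/2) * exp (x/2) = exp (x::real)"
  by (simp add: exp_add[symmetric])

lemma main:
  fixes F1 F2 A B C D :: "real \<times> real \<Rightarrow> mat2" and \<omega> :: "real \<times> real \<Rightarrow> real"
  assumes M: "open M" and wd: "\<omega> differentiable_on M"
    and det: "\<forall>p\<in>M. det (F1 p) = 1 \<and> det (F2 p) = 1"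
    and d1: "\<forall>p\<in>M. (F1 has_derivative (\<lambda>h. fst h *\<^sub>R (F1 p ** A p) + snd h *\<^sub>R (F1 p ** B p))) (at p)"
    and d2: "\<forall>p\<in>M. (F2 has_derivative (\<lambda>h. fst h *\<^sub>R (C p ** F2 p) + snd h *\<^sub>R (D p ** F2 p))) (at p)"
    and AC: "\<forall>p\<in>M. A p + C p = mat2 0 (exp (\<omega> p/2)) 0 0"
    and BD: "\<forall>p\<in>M. B p + D p = mat2 0 0 (exp (\<omega> p/2)) 0"
    and diag: "\<forall>p\<in>M. (B p ** mat2 0 1 0 0 + mat2 0 1 0 0 ** D p)$1$1
                       - (B p ** mat2 0 1 0 0 + mat2 0 1 0 0 ** D p)$2$2 = exp (\<omega> p/2)"
  shows "cmc1_conformal_timelike M (\<lambda>p. F1 p ** F2 p) \<omega> (\<lambda>p. F1 p ** kprime ** F2 p)"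
proof -
  define E where "E = mat2 0 1 0 0"
  define X where "X q = F1 q ** mat2 0 (exp (\<omega> q/2)) 0 0 ** F2 q" for q
  define Y where "Y q = F1 q ** mat2 0 0 (exp (\<omega> q/2)) 0 ** F2 q" for q
  have alg: "F1 q ** (fst h *\<^sub>R (C q ** F2 q) + snd h *\<^sub>R (D q ** F2 q)) +
      (fst h *\<^sub>R (F1 q ** A q) + snd h *\<^sub>R (F1 q ** B q)) ** F2 q
      = fst h *\<^sub>R (F1 q ** (A q + C q) ** F2 q) + snd h *\<^sub>R (F1 q ** (B q + D q) ** F2 q)" for q h
    by (simp add: ent)
  have dphi: "((\<lambda>p. F1 p ** F2 p) has_derivative (\<lambda>h. fst h *\<^sub>R X q + snd h *\<^sub>R Y q)) (at q)"
    if q: "q \<in> M" for q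
    using bounded_bilinear.FDERIV[OF bilin d1[rule_format, OF q] d2[rule_format, OF q]]
    unfolding alg X_def Y_def AC[rule_format, OF q] BD[rule_format, OF q] .
  have pdu: "pd_u (\<lambda>p. F1 p ** F2 p) q = X q" if "q \<in> M" for q
  proof -
    obtain a b where "q = (a,b)" by (cases q)
    then show ?thesis using partials(3) dphi[OF that] by simp
  qed
  show ?thesis unfolding cmc1_conformal_timelike_def
  proof (intro ballI)
    fix p assume p: "p \<in> M"
    obtain a b where ab: "p = (a,b)" by (cases p)
    let ?e = "exp (\<omega> p / 2)"
    have dF1: "det (F1 p) = 1" and dF2: "det (F2 p) = 1" using det p by auto
    have dp: "((\<lambda>p. F1 p ** F2 p) has_derivative (\<lambda>h. fst h *\<^sub>R X p + snd h *\<^sub>R Y p)) (at (a,b))"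
      using dphi[OF p] ab by simp
    note pp = partials[OF dp, folded ab]
    have phi1: "F1 p ** F2 p = F1 p ** mat2 1 0 0 1 ** F2 p" by (simp add: ent)
    have ipXX: "ip (X p) (X p) = 0" unfolding X_def ip_inv[OF dF1 dF2]
      by (simp add: ip_def trace2 mult_nth)
    have ipYY: "ip (Y p) (Y p) = 0" unfolding Y_def ip_inv[OF dF1 dF2]
      by (simp add: ip_def trace2 mult_nth)
    have ipXY: "ip (X p) (Y p) = exp (\<omega> p) / 2" unfolding X_def Y_def ip_inv[OF dF1 dF2]
      by (simp add: ip_def trace2 mult_nth exp_half)
    have inj: "inj (\<lambda>h. fst h *\<^sub>R X p + snd h *\<^sub>R Y p)"
    proof (rule injI)
      fix h k :: "real \<times> real"
      assume eq: "fst h *\<^sub>R X p + snd h *\<^sub>R Y p = fst k *\<^sub>R X p + snd k *\<^sub>R Y p"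
      have "ip (fst h *\<^sub>R X p + snd h *\<^sub>R Y p) (X p) = ip (fst k *\<^sub>R X p + snd k *\<^sub>R Y p) (X p)"
        "ip (fst h *\<^sub>R X p + snd h *\<^sub>R Y p) (Y p) = ip (fst k *\<^sub>R X p + snd k *\<^sub>R Y p) (Y p)"
        using eq by simp_all
      then have "snd h * exp (\<omega> p) = snd k * exp (\<omega> p)" "fst h * exp (\<omega> p) = fst k * exp (\<omega> p)"
        unfolding ip_lin using ipXX ipYY ipXY ip_sym[of "Y p" "X p"] by simp_all
      then show "h = k" by (simp add: prod_eq_iff)
    qed
    obtain f' where f': "(\<omega> has_derivative f') (at p)"
      using wd p M by (auto simp: differentiable_on_eq_differentiable_at differentiable_def)
    have lin: "linear f'" using f' by (simp add: has_derivative_linear)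
    have f'2: "(\<omega> has_derivative (\<lambda>h. fst h *\<^sub>R f' (1,0) + snd h *\<^sub>R f' (0,1))) (at p)"
      using f' lin_decomp[OF lin] by metis
    have wv: "((\<lambda>t. \<omega> (a,t)) has_real_derivative pd_v \<omega> p) (at b)"
      using partials(2,4)[OF f'2[unfolded ab]] ab
      by (simp add: has_real_derivative_iff_has_vector_derivative)
    have ev: "((\<lambda>t. exp (\<omega> (a,t)/2)) has_real_derivative ?e * (pd_v \<omega> p / 2)) (at b)"
      using ab by (auto intro!: derivative_eq_intros wv)
    have Ev: "((\<lambda>t. exp (\<omega> (a,t)/2) *\<^sub>R E) has_vector_derivative (?e * (pd_v \<omega> p / 2)) *\<^sub>R E) (at b)"
      using has_vector_derivative_scaleR[OF ev has_vector_derivative_const[of E]]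
      by simp
    have F1v: "((\<lambda>t. F1 (a,t)) has_vector_derivative F1 p ** B p) (at b)"
      using partials(2)[OF d1[rule_format, OF p, unfolded ab]] ab by simp
    have F2v: "((\<lambda>t. F2 (a,t)) has_vector_derivative D p ** F2 p) (at b)"
      using partials(2)[OF d2[rule_format, OF p, unfolded ab]] ab by simp
    define Mid where "Mid = B p ** (?e *\<^sub>R E) + (?e * (pd_v \<omega> p / 2)) *\<^sub>R E + (?e *\<^sub>R E) ** D p"
    have Gv: "((\<lambda>t. F1 (a,t) ** (exp (\<omega> (a,t)/2) *\<^sub>R E) ** F2 (a,t)) has_vector_derivative
               F1 p ** Mid ** F2 p) (at b)"
      using bounded_bilinear.has_vector_derivative[OF bilin
          bounded_bilinear.has_vector_derivative[OF bilin F1v Ev] F2v]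
      by (rule has_vector_derivative_eq_rhs) (simp add: Mid_def ab ent)
    define S where "S = (\<lambda>t. (a,t)) -` M"
    have S: "open S" unfolding S_def
      by (rule continuous_open_vimage[OF M]) (auto intro!: continuous_intros)
    have bS: "b \<in> S" using p ab S_def by simp
    have "((\<lambda>t. pd_u (\<lambda>p. F1 p ** F2 p) (a,t)) has_vector_derivative F1 p ** Mid ** F2 p) (at b)"
    proof (rule has_vector_derivative_transform_within_open[OF Gv S bS])
      fix t assume "t \<in> S"
      then have "(a,t) \<in> M" by (simp add: S_def)
      then show "F1 (a,t) ** (exp (\<omega> (a,t)/2) *\<^sub>R E) ** F2 (a,t) = pd_u (\<lambda>p. F1 p ** F2 p) (a,t)"
        using pdu by (simp add: X_def E_def ent)
    qed
    then have hv: "has_pd_v (pd_u (\<lambda>p. F1 p ** F2 p)) (F1 p ** Mid ** F2 p) p"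
      and pv: "pd_v (pd_u (\<lambda>p. F1 p ** F2 p)) p = F1 p ** Mid ** F2 p"
      using ab by (simp_all add: has_pd_v_def pd_v_def vector_derivative_at)
    have "ip Mid kprime = (Mid$1$1 - Mid$2$2)/2"
      by (simp add: ip_def trace2 mult_nth kprime_def)
    also have "\<dots> = ?e * ?e / 2"
      using diag[rule_format, OF p] unfolding Mid_def E_def by (simp add: ent)
    finally have ipM: "ip Mid kprime = exp (\<omega> p) / 2" by (simp add: exp_half)
    have H: "2 * exp (- \<omega> p) * ip (F1 p ** Mid ** F2 p) (F1 p ** kprime ** F2 p) = 1"
      unfolding ip_inv[OF dF1 dF2] ipM by (simp add: exp_minus_inverse mult.commute)
    show "F1 p ** F2 p \<in> H31 \<and>
      (\<lambda>p. F1 p ** F2 p) differentiable at p \<and>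
      inj (frechet_derivative (\<lambda>p. F1 p ** F2 p) (at p)) \<and>
      ip (pd_u (\<lambda>p. F1 p ** F2 p) p) (pd_u (\<lambda>p. F1 p ** F2 p) p) = 0 \<and>
      ip (pd_v (\<lambda>p. F1 p ** F2 p) p) (pd_v (\<lambda>p. F1 p ** F2 p) p) = 0 \<and>
      ip (pd_u (\<lambda>p. F1 p ** F2 p) p) (pd_v (\<lambda>p. F1 p ** F2 p) p) = exp (\<omega> p) / 2 \<and>
      ip (F1 p ** kprime ** F2 p) (F1 p ** kprime ** F2 p) = 1 \<and>
      ip (F1 p ** kprime ** F2 p) (F1 p ** F2 p) = 0 \<and>
      ip (F1 p ** kprime ** F2 p) (pd_u (\<lambda>p. F1 p ** F2 p) p) = 0 \<and>
      ip (F1 p ** kprime ** F2 p) (pd_v (\<lambda>p. F1 p ** F2 p) p) = 0 \<and>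
      (\<exists>D. has_pd_v (pd_u (\<lambda>p. F1 p ** F2 p)) D p) \<and>
      2 * exp (- \<omega> p) * ip (pd_v (pd_u (\<lambda>p. F1 p ** F2 p)) p) (F1 p ** kprime ** F2 p) = 1"
    proof (intro conjI)
      show "F1 p ** F2 p \<in> H31" using dF1 dF2 by (simp add: H31_def ip_self det_mul)
      show "(\<lambda>p. F1 p ** F2 p) differentiable at p" using dphi[OF p] by (auto simp: differentiable_def)
      show "inj (frechet_derivative (\<lambda>p. F1 p ** F2 p) (at p))"
        using inj frechet_derivative_at[OF dphi[OF p]] by simp
      show "ip (pd_u (\<lambda>p. F1 p ** F2 p) p) (pd_u (\<lambda>p. F1 p ** F2 p) p) = 0" using pp ipXX by simp
      show "ip (pd_v (\<lambda>p. F1 p ** F2 p) p) (pd_v (\<lambda>p. F1 p ** F2 p) p) = 0" using pp ipYY by simp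
      show "ip (pd_u (\<lambda>p. F1 p ** F2 p) p) (pd_v (\<lambda>p. F1 p ** F2 p) p) = exp (\<omega> p) / 2"
        using pp ipXY by simp
      show "ip (F1 p ** kprime ** F2 p) (F1 p ** kprime ** F2 p) = 1"
        unfolding ip_inv[OF dF1 dF2] by (simp add: ip_def trace2 mult_nth kprime_def)
      show "ip (F1 p ** kprime ** F2 p) (F1 p ** F2 p) = 0"
        unfolding phi1 ip_inv[OF dF1 dF2] by (simp add: ip_def trace2 mult_nth kprime_def)
      show "ip (F1 p ** kprime ** F2 p) (pd_u (\<lambda>p. F1 p ** F2 p) p) = 0"
        unfolding pp X_def ip_inv[OF dF1 dF2] by (simp add: ip_def trace2 mult_nth kprime_def)
      show "ip (F1 p ** kprime ** F2 p) (pd_v (\<lambda>p. F1 p ** F2 p) p) = 0"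
        unfolding pp Y_def ip_inv[OF dF1 dF2] by (simp add: ip_def trace2 mult_nth kprime_def)
      show "\<exists>D. has_pd_v (pd_u (\<lambda>p. F1 p ** F2 p)) D p" using hv by blast
      show "2 * exp (- \<omega> p) * ip (pd_v (pd_u (\<lambda>p. F1 p ** F2 p)) p) (F1 p ** kprime ** F2 p) = 1"
        unfolding pv by (rule H)
    qed
  qed
qed



definition adj2 :: "mat2 \<Rightarrow> mat2" where
  "adj2 A = mat2 (A$2$2) (- A$1$2) (- A$2$1) (A$1$1)"

lemma adj2_inv: assumes "det (A::mat2) = 1" shows "matrix_inv A = adj2 A"
proof -
  have h: "A ** adj2 A = mat 1 \<and> adj2 A ** A = mat 1"
    using assms by (simp add: ent adj2_def det_2 mat_nth2)
  then have "\<exists>A'. A ** A' = mat 1 \<and> A' ** A = mat 1" by blast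
  from someI_ex[OF this] have i: "A ** matrix_inv A = mat 1" "matrix_inv A ** A = mat 1"
    unfolding matrix_inv_def by auto
  have "matrix_inv A = matrix_inv A ** (A ** adj2 A)" using h by simp
  also have "\<dots> = adj2 A" by (simp add: matrix_mul_assoc i)
  finally show ?thesis .
qed

lemma bl_transpose: "bounded_linear (transpose :: mat2 \<Rightarrow> mat2)"
  unfolding linear_conv_bounded_linear[symmetric]
  by (auto intro!: linearI simp: ent transpose_nth)

lemma bl_adj2: "bounded_linear adj2"
  unfolding linear_conv_bounded_linear[symmetric]
  by (auto intro!: linearI simp: ent adj2_def)

theorem corollary5p2:
  fixes M :: "(real \<times> real) set"
    and \<omega> Q R :: "real \<times> real \<Rightarrow> real"
    and \<Phi>1 \<Phi>2 \<Psi>1 \<Psi>2 :: "real \<times> real \<Rightarrow> mat2"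
  assumes "open M" and "connected M" and "simply_connected M"
    and "smooth_on M \<omega>" and "smooth_on M Q" and "smooth_on M R"
  shows "((\<forall>p\<in>M. \<Phi>1 p \<in> SL2R \<and> \<Phi>2 p \<in> SL2R)
          \<and> frame_eq M \<Phi>1 (U1 \<omega> Q) (V1 \<omega> R) \<and> frame_eq M \<Phi>2 (U2 \<omega> Q) (V2 \<omega> R)
          \<longrightarrow> cmc1_conformal_timelike M (\<lambda>p. \<Phi>1 p ** transpose (\<Phi>2 p)) \<omega>
                (\<lambda>p. \<Phi>1 p ** kprime ** transpose (\<Phi>2 p)))
       \<and> ((\<forall>p\<in>M. \<Psi>1 p \<in> SL2R \<and> \<Psi>2 p \<in> SL2R)
          \<and> frame_eq M \<Psi>1 (U1 \<omega> Q) (V1 \<omega> R) \<and> frame_eq M \<Psi>2 (U2' \<omega> Q) (V2' \<omega> R)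
          \<longrightarrow> cmc1_conformal_timelike M (\<lambda>p. \<Psi>1 p ** matrix_inv (\<Psi>2 p)) \<omega>
                (\<lambda>p. \<Psi>1 p ** kprime ** matrix_inv (\<Psi>2 p)))"
proof -
  have wd: "\<omega> differentiable_on M"
    using assms(4) unfolding smooth_on_def by (metis iter_pd.simps(1))
  have P1: "cmc1_conformal_timelike M (\<lambda>p. \<Phi>1 p ** transpose (\<Phi>2 p)) \<omega>
                (\<lambda>p. \<Phi>1 p ** kprime ** transpose (\<Phi>2 p))"
    if sl: "\<forall>p\<in>M. \<Phi>1 p \<in> SL2R \<and> \<Phi>2 p \<in> SL2R" and f1: "frame_eq M \<Phi>1 (U1 \<omega> Q) (V1 \<omega> R)"
      and f2: "frame_eq M \<Phi>2 (U2 \<omega> Q) (V2 \<omega> R)"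
  proof (rule main[where A="U1 \<omega> Q" and B="V1 \<omega> R" and C="\<lambda>p. transpose (U2 \<omega> Q p)"
        and D="\<lambda>p. transpose (V2 \<omega> R p)"])
    show "open M" by fact
    show "\<omega> differentiable_on M" by fact
    show "\<forall>p\<in>M. det (\<Phi>1 p) = 1 \<and> det (transpose (\<Phi>2 p)) = 1"
      using sl by (simp add: SL2R_def det_transpose)
    show "\<forall>p\<in>M. (\<Phi>1 has_derivative (\<lambda>h. fst h *\<^sub>R (\<Phi>1 p ** U1 \<omega> Q p) + snd h *\<^sub>R (\<Phi>1 p ** V1 \<omega> R p))) (at p)"
      using f1 by (simp add: frame_eq_def)
    show "\<forall>p\<in>M. ((\<lambda>p. transpose (\<Phi>2 p)) has_derivative (\<lambda>h. fst h *\<^sub>R (transpose (U2 \<omega> Q p) ** transpose (\<Phi>2 p)) + snd h *\<^sub>R (transpose (V2 \<omega> R p) ** transpose (\<Phi>2 p)))) (at p)"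
    proof
      fix p assume "p \<in> M"
      with f2 have "(\<Phi>2 has_derivative (\<lambda>h. fst h *\<^sub>R (\<Phi>2 p ** U2 \<omega> Q p) + snd h *\<^sub>R (\<Phi>2 p ** V2 \<omega> R p))) (at p)"
        by (simp add: frame_eq_def)
      from bounded_linear.has_derivative[OF bl_transpose this]
      show "((\<lambda>p. transpose (\<Phi>2 p)) has_derivative (\<lambda>h. fst h *\<^sub>R (transpose (U2 \<omega> Q p) ** transpose (\<Phi>2 p)) + snd h *\<^sub>R (transpose (V2 \<omega> R p) ** transpose (\<Phi>2 p)))) (at p)"
        by (rule has_derivative_eq_rhs) (simp add: fun_eq_iff ent transpose_nth)
    qed
    show "\<forall>p\<in>M. U1 \<omega> Q p + transpose (U2 \<omega> Q p) = mat2 0 (exp (\<omega> p / 2)) 0 0"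
      by (simp add: ent transpose_nth U1_def U2_def)
    show "\<forall>p\<in>M. V1 \<omega> R p + transpose (V2 \<omega> R p) = mat2 0 0 (exp (\<omega> p / 2)) 0"
      by (simp add: ent transpose_nth V1_def V2_def)
    show "\<forall>p\<in>M. (V1 \<omega> R p ** mat2 0 1 0 0 + mat2 0 1 0 0 ** transpose (V2 \<omega> R p)) $ 1 $ 1 -
        (V1 \<omega> R p ** mat2 0 1 0 0 + mat2 0 1 0 0 ** transpose (V2 \<omega> R p)) $ 2 $ 2 = exp (\<omega> p / 2)"
      by (simp add: mult_nth transpose_nth V1_def V2_def)
  qed
  have P2: "cmc1_conformal_timelike M (\<lambda>p. \<Psi>1 p ** matrix_inv (\<Psi>2 p)) \<omega>
                (\<lambda>p. \<Psi>1 p ** kprime ** matrix_inv (\<Psi>2 p))"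
    if sl: "\<forall>p\<in>M. \<Psi>1 p \<in> SL2R \<and> \<Psi>2 p \<in> SL2R" and f1: "frame_eq M \<Psi>1 (U1 \<omega> Q) (V1 \<omega> R)"
      and f2: "frame_eq M \<Psi>2 (U2' \<omega> Q) (V2' \<omega> R)"
  proof (rule main[where A="U1 \<omega> Q" and B="V1 \<omega> R" and C="\<lambda>p. adj2 (U2' \<omega> Q p)"
        and D="\<lambda>p. adj2 (V2' \<omega> R p)"])
    have inv: "matrix_inv (\<Psi>2 p) = adj2 (\<Psi>2 p)" if "p \<in> M" for p
      using sl that by (simp add: SL2R_def adj2_inv)
    show "open M" by fact
    show "\<omega> differentiable_on M" by fact
    show "\<forall>p\<in>M. det (\<Psi>1 p) = 1 \<and> det (matrix_inv (\<Psi>2 p)) = 1"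
      using sl inv by (simp add: SL2R_def adj2_def det_2 mult.commute)
    show "\<forall>p\<in>M. (\<Psi>1 has_derivative (\<lambda>h. fst h *\<^sub>R (\<Psi>1 p ** U1 \<omega> Q p) + snd h *\<^sub>R (\<Psi>1 p ** V1 \<omega> R p))) (at p)"
      using f1 by (simp add: frame_eq_def)
    show "\<forall>p\<in>M. ((\<lambda>p. matrix_inv (\<Psi>2 p)) has_derivative (\<lambda>h. fst h *\<^sub>R (adj2 (U2' \<omega> Q p) ** matrix_inv (\<Psi>2 p)) + snd h *\<^sub>R (adj2 (V2' \<omega> R p) ** matrix_inv (\<Psi>2 p)))) (at p)"
    proof
      fix p assume p: "p \<in> M"
      with f2 have "(\<Psi>2 has_derivative (\<lambda>h. fst h *\<^sub>R (\<Psi>2 p ** U2' \<omega> Q p) + snd h *\<^sub>R (\<Psi>2 p ** V2' \<omega> R p))) (at p)"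
        by (simp add: frame_eq_def)
      from bounded_linear.has_derivative[OF bl_adj2 this]
      have "((\<lambda>p. adj2 (\<Psi>2 p)) has_derivative (\<lambda>h. fst h *\<^sub>R (adj2 (U2' \<omega> Q p) ** matrix_inv (\<Psi>2 p)) + snd h *\<^sub>R (adj2 (V2' \<omega> R p) ** matrix_inv (\<Psi>2 p)))) (at p)"
        by (rule has_derivative_eq_rhs) (simp add: fun_eq_iff ent adj2_def inv[OF p])
      then show "((\<lambda>p. matrix_inv (\<Psi>2 p)) has_derivative (\<lambda>h. fst h *\<^sub>R (adj2 (U2' \<omega> Q p) ** matrix_inv (\<Psi>2 p)) + snd h *\<^sub>R (adj2 (V2' \<omega> R p) ** matrix_inv (\<Psi>2 p)))) (at p)"
        by (rule has_derivative_transform_within_open[OF _ \<open>open M\<close> p]) (simp add: inv)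
    qed
    show "\<forall>p\<in>M. U1 \<omega> Q p + adj2 (U2' \<omega> Q p) = mat2 0 (exp (\<omega> p / 2)) 0 0"
      by (simp add: ent adj2_def U1_def U2'_def)
    show "\<forall>p\<in>M. V1 \<omega> R p + adj2 (V2' \<omega> R p) = mat2 0 0 (exp (\<omega> p / 2)) 0"
      by (simp add: ent adj2_def V1_def V2'_def)
    show "\<forall>p\<in>M. (V1 \<omega> R p ** mat2 0 1 0 0 + mat2 0 1 0 0 ** adj2 (V2' \<omega> R p)) $ 1 $ 1 -
        (V1 \<omega> R p ** mat2 0 1 0 0 + mat2 0 1 0 0 ** adj2 (V2' \<omega> R p)) $ 2 $ 2 = exp (\<omega> p / 2)"
      by (simp add: mult_nth adj2_def V1_def V2'_def)
  qed
  show ?thesis using P1 P2 by blast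
qed

end
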